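(* Let $s\ge0$, $p\in[1,+\infty)$. There is a function $\theta:(0,+\infty)\to(0,+\infty)$ with $\lim_{\varepsilon\to0^+}\theta(\varepsilon)=0$ (depending only on $d,p,s$) such that the following holds. For every $f\in B^{s,\infty}_p(\mathbb R^d)$, every $\kappa\in\mathbb R$ and every $\varepsilon\in(0,1)$ there is a constant $C>0$ such that for all $x\in\mathbb R^d$ and all $j,l\in\mathbb N$ with $l\in[(1-\varepsilon)j,(1+\varepsilon)j]$, $$|Q_lf(x)|\le C\,2^{\left(\frac dp-s+\theta(\varepsilon)\right)j}\,\|f\|_{l,\lambda_j(x),\varepsilon}+C\,2^{\kappa j}.$$
   Context: Standing setup. $\psi^{(1)},\dots,\psi^{(2^d-1)}$ are the wavelets associated with an orthogonal multiresolution analysis of $L^2(\mathbb R^d)$ with scaling function $\varphi$; they are smooth and have fast decay: for every $N\ge0$ there is $C_N$ with $|\psi^{(i)}(x)|\le C_N(1+\|x\|)^{-N}$, $\|\cdot\|$ the supremum norm. For $j\ge0$, $k\in\mathbb Z^d$, the dyadic cube $\lambda=(j,k)$ is $\prod_{m=1}^d[k_m2^{-j},(k_m+1)2^{-j})$; $\Lambda_j$ is the set of such cubes; $\lambda_j(x)$ is the unique cube of $\Lambda_j$ containing $x$; $\psi^{(i)}_\lambda(x)=\psi^{(i)}(2^jx-k)$. For $f$ set $C_k=\int\overline{\varphi(x-k)}f$, $c^{(i)}_\lambda=2^{dj}\int\overline{\psi^{(i)}_\lambda}f$ for $\lambda\in\Lambda_j$, $Q_lf(x)=\sum_i\sum_{\lambda\in\Lambda_l}c^{(i)}_\lambda\psi^{(i)}_\lambda(x)$.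 $B^{s,\infty}_p(\mathbb R^d)$ is the set of $f$ with $(C_k)\in\ell^p$ and $\sup_j2^{(s-d/p)j}(\sum_i\sum_{\lambda\in\Lambda_j}|c^{(i)}_\lambda|^p)^{1/p}<\infty$. For a dyadic cube $\lambda_0$, $l\in\mathbb N$ and $\varepsilon>0$, let $\Lambda_{l,\lambda_0,\varepsilon}=\{\lambda\in\Lambda_l:\ (\lambda+B(0,2^{-(1-\varepsilon)l}))\cap\lambda_0\neq\emptyset\}$ ($B(0,r)$ the open sup-norm ball) and $$\|f\|_{l,\lambda_0,\varepsilon}=\Big(\sum_i\sum_{\lambda\in\Lambda_{l,\lambda_0,\varepsilon}}\big|c^{(i)}_\lambda2^{(s-d/p)l}\big|^p\Big)^{1/p}.$$ *)

theory Defs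
  imports "HOL-Analysis.Analysis"
begin

section \<open>Basic notation on R^d (d = CARD('n)) and Z^d\<close>

definition supnorm :: "real^'n \<Rightarrow> real" where
  "supnorm x = Max (range (\<lambda>m. \<bar>x $ m\<bar>))"

definition ivec :: "int^'n \<Rightarrow> real^'n" where
  "ivec k = (\<chi> m. real_of_int (k $ m))"

definition dcube :: "nat \<Rightarrow> int^'n \<Rightarrow> (real^'n) set" where
  "dcube j k = {x. \<forall>m. real_of_int (k $ m) / 2 ^ j \<le> x $ m \<and> x $ m < (real_of_int (k $ m) + 1) / 2 ^ j}"

text \<open>index k of the cube lambda_j(x) of Lambda_j containing x\<close>
definition cube_idx :: "nat \<Rightarrow> real^'n \<Rightarrow> int^'n" where
  "cube_idx j x = (\<chi> m. \<lfloor>2 ^ j * x $ m\<rfloor>)"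

coinductive smooth :: "(real^'n \<Rightarrow> complex) \<Rightarrow> bool" where
  "(\<forall>x. f differentiable at x) \<Longrightarrow>
   (\<forall>b\<in>Basis. smooth (\<lambda>x. frechet_derivative f (at x) b)) \<Longrightarrow> smooth f"

definition L2 :: "(real^'n \<Rightarrow> complex) \<Rightarrow> bool" where
  "L2 g \<longleftrightarrow> g \<in> borel_measurable lebesgue \<and> integrable lebesgue (\<lambda>x. (cmod (g x))\<^sup>2)"

definition l2inner :: "(real^'n \<Rightarrow> complex) \<Rightarrow> (real^'n \<Rightarrow> complex) \<Rightarrow> complex" where
  "l2inner g h = (LINT x|lebesgue. g x * cnj (h x))"

definition l2norm :: "(real^'n \<Rightarrow> complex) \<Rightarrow> real" where
  "l2norm g = sqrt (LINT x|lebesgue. (cmod (g x))\<^sup>2)"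

definition in_l2_closure :: "(real^'n \<Rightarrow> complex) set \<Rightarrow> (real^'n \<Rightarrow> complex) \<Rightarrow> bool" where
  "in_l2_closure S g \<longleftrightarrow> L2 g \<and> (\<forall>e>0. \<exists>h\<in>S. l2norm (\<lambda>x. g x - h x) < e)"

text \<open>closed linear subspace of L^2 (functions, so closedness includes a.e. modifications)\<close>
definition closed_l2_subspace :: "(real^'n \<Rightarrow> complex) set \<Rightarrow> bool" where
  "closed_l2_subspace V \<longleftrightarrow> (\<forall>g\<in>V. L2 g) \<and> (\<lambda>x. 0) \<in> V \<and>
     (\<forall>g\<in>V. \<forall>h\<in>V. \<forall>a b. (\<lambda>x. a * g x + b * h x) \<in> V) \<and>
     (\<forall>g. in_l2_closure V g \<longrightarrow> g \<in> V)"

definition lin_span :: "'i set \<Rightarrow> ('i \<Rightarrow> real^'n \<Rightarrow> complex) \<Rightarrow> (real^'n \<Rightarrow> complex) set" where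
  "lin_span I e = {(\<lambda>x. \<Sum>i\<in>K. a i * e i x) | K a. finite K \<and> K \<subseteq> I}"

definition is_onb :: "'i set \<Rightarrow> ('i \<Rightarrow> real^'n \<Rightarrow> complex) \<Rightarrow> (real^'n \<Rightarrow> complex) set \<Rightarrow> bool" where
  "is_onb I e W \<longleftrightarrow> (\<forall>i\<in>I. e i \<in> W) \<and>
     (\<forall>i\<in>I. \<forall>i'\<in>I. l2inner (e i) (e i') = (if i = i' then 1 else 0)) \<and>
     (\<forall>g\<in>W. in_l2_closure (lin_span I e) g)"

definition orthogonal_MRA :: "(int \<Rightarrow> (real^'n \<Rightarrow> complex) set) \<Rightarrow> (real^'n \<Rightarrow> complex) \<Rightarrow> bool" where
  "orthogonal_MRA V \<phi> \<longleftrightarrow>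
     (\<forall>j. closed_l2_subspace (V j)) \<and>
     (\<forall>j. V j \<subseteq> V (j + 1)) \<and>
     (\<forall>g. L2 g \<longrightarrow> in_l2_closure (\<Union>j. V j) g) \<and>
     (\<forall>g. (\<forall>j. g \<in> V j) \<longrightarrow> l2norm g = 0) \<and>
     (\<forall>j g. g \<in> V j \<longleftrightarrow> (\<lambda>x. g (2 *\<^sub>R x)) \<in> V (j + 1)) \<and>
     is_onb UNIV (\<lambda>k::int^'n. \<lambda>x. \<phi> (x - ivec k)) (V 0)"

abbreviation widx :: "'n itself \<Rightarrow> nat set" where
  "widx _ \<equiv> {1 .. 2 ^ CARD('n) - 1}"

definition MRA_wavelets :: "(real^'n \<Rightarrow> complex) \<Rightarrow> (nat \<Rightarrow> real^'n \<Rightarrow> complex) \<Rightarrow> bool" where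
  "MRA_wavelets \<phi> \<psi> \<longleftrightarrow> (\<exists>V. orthogonal_MRA V \<phi> \<and>
     is_onb (widx TYPE('n) \<times> (UNIV :: (int^'n) set)) (\<lambda>(i, k). \<lambda>x. \<psi> i (x - ivec k))
       {g \<in> V 1. \<forall>h\<in>V 0. l2inner g h = 0})"

definition wavelet_setup :: "(real^'n \<Rightarrow> complex) \<Rightarrow> (nat \<Rightarrow> real^'n \<Rightarrow> complex) \<Rightarrow> bool" where
  "wavelet_setup \<phi> \<psi> \<longleftrightarrow> MRA_wavelets \<phi> \<psi> \<and>
     (\<forall>i\<in>widx TYPE('n). smooth (\<psi> i) \<and>
        (\<forall>N::nat. \<exists>CN. \<forall>x. cmod (\<psi> i x) \<le> CN * (1 + supnorm x) powr (- real N)))"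

definition psi_at :: "(nat \<Rightarrow> real^'n \<Rightarrow> complex) \<Rightarrow> nat \<Rightarrow> nat \<Rightarrow> int^'n \<Rightarrow> real^'n \<Rightarrow> complex" where
  "psi_at \<psi> i j k x = \<psi> i ((2 ^ j) *\<^sub>R x - ivec k)"

definition scoef :: "(real^'n \<Rightarrow> complex) \<Rightarrow> (real^'n \<Rightarrow> complex) \<Rightarrow> int^'n \<Rightarrow> complex" where
  "scoef \<phi> f k = (LINT x|lebesgue. cnj (\<phi> (x - ivec k)) * f x)"

definition wcoef :: "(nat \<Rightarrow> real^'n \<Rightarrow> complex) \<Rightarrow> (real^'n \<Rightarrow> complex) \<Rightarrow> nat \<Rightarrow> nat \<Rightarrow> int^'n \<Rightarrow> complex" where
  "wcoef \<psi> f i j k = 2 ^ (CARD('n) * j) * (LINT x|lebesgue. cnj (psi_at \<psi> i j k x) * f x)"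

definition Qop :: "(nat \<Rightarrow> real^'n \<Rightarrow> complex) \<Rightarrow> (real^'n \<Rightarrow> complex) \<Rightarrow> nat \<Rightarrow> real^'n \<Rightarrow> complex" where
  "Qop \<psi> f l x = (\<Sum>i\<in>widx TYPE('n). \<Sum>\<^sub>\<infinity>k. wcoef \<psi> f i l k * psi_at \<psi> i l k x)"

definition besov :: "(real^'n \<Rightarrow> complex) \<Rightarrow> (nat \<Rightarrow> real^'n \<Rightarrow> complex) \<Rightarrow> real \<Rightarrow> real \<Rightarrow> (real^'n \<Rightarrow> complex) set" where
  "besov \<phi> \<psi> s p = {f.
     (\<forall>k. integrable lebesgue (\<lambda>x. cnj (\<phi> (x - ivec k)) * f x)) \<and>
     (\<forall>i\<in>widx TYPE('n). \<forall>j k. integrable lebesgue (\<lambda>x. cnj (psi_at \<psi> i j k x) * f x)) \<and>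
     (\<lambda>k. cmod (scoef \<phi> f k) powr p) summable_on UNIV \<and>
     (\<forall>i\<in>widx TYPE('n). \<forall>j. (\<lambda>k. cmod (wcoef \<psi> f i j k) powr p) summable_on UNIV) \<and>
     (\<exists>B. \<forall>j. 2 powr ((s - real CARD('n) / p) * real j) *
          (\<Sum>i\<in>widx TYPE('n). \<Sum>\<^sub>\<infinity>k. cmod (wcoef \<psi> f i j k) powr p) powr (1 / p) \<le> B)}"

text \<open>Lambda_{l,lambda_0,eps} for lambda_0 = (j0,k0)\<close>
definition Lam_near :: "nat \<Rightarrow> nat \<Rightarrow> int^'n \<Rightarrow> real \<Rightarrow> (int^'n) set" where
  "Lam_near l j0 k0 \<epsilon> = {k. {a + b | a b. a \<in> dcube l k \<and> supnorm b < 2 powr (- (1 - \<epsilon>) * real l)}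
                              \<inter> dcube j0 k0 \<noteq> {}}"

definition locnorm :: "(nat \<Rightarrow> real^'n \<Rightarrow> complex) \<Rightarrow> (real^'n \<Rightarrow> complex) \<Rightarrow> real \<Rightarrow> real \<Rightarrow>
     nat \<Rightarrow> nat \<Rightarrow> int^'n \<Rightarrow> real \<Rightarrow> real" where
  "locnorm \<psi> f s p l j0 k0 \<epsilon> =
     (\<Sum>i\<in>widx TYPE('n). \<Sum>k\<in>Lam_near l j0 k0 \<epsilon>.
        cmod (wcoef \<psi> f i l k * 2 powr ((s - real CARD('n) / p) * real l)) powr p) powr (1 / p)"

end

theory Submission
  imports Defs
begin

lemma inv_sq_nat_aux: "N \<ge> 1 \<Longrightarrow> (\<Sum>n<N. 1/(real n + 1)^2) \<le> 2 - 1/real N"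
proof (induction N rule: nat_induct_at_least)
  case base then show ?case by simp
next
  case (Suc N)
  have N0: "real N > 0" using Suc.hyps by simp
  have e: "1/real N - 1/real (Suc N) = 1/(real N * (real N + 1))"
    using N0 by (simp add: field_simps)
  have "1/(real N + 1)^2 \<le> 1/(real N * (real N + 1))"
    using N0 by (intro divide_left_mono) (auto simp: power2_eq_square)
  then have "1/(real N + 1)^2 \<le> 1/real N - 1/real (Suc N)" using e by simp
  then show ?case using Suc.IH by simp
qed

lemma inv_sq_nat: "(\<Sum>n<N. 1/(real n + 1)^2) \<le> 2"
proof (cases "N \<ge> 1")
  case True
  then show ?thesis using inv_sq_nat_aux[OF True] by (smt (verit) of_nat_0_le_iff divide_nonneg_nonneg)
next
  case False then have "N = 0" by simp
  then show ?thesis by simp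
qed

lemma inv_sq_nonneg_int:
  assumes "finite S" "S \<subseteq> {0..}"
  shows "(\<Sum>u\<in>S. 1/(1+\<bar>real_of_int u\<bar>)^2) \<le> 2"
proof -
  have inj: "inj_on nat S" using assms(2) by (intro inj_onI) (metis atLeast_iff nat_eq_iff2 subsetD)
  have "(\<Sum>u\<in>S. 1/(1+\<bar>real_of_int u\<bar>)^2) = (\<Sum>n\<in>nat ` S. 1/(real n + 1)^2)"
    using assms(2) by (subst sum.reindex[OF inj]) (auto intro!: sum.cong simp: add.commute)
  also obtain N where "nat ` S \<subseteq> {..<N}"
    using assms(1) finite_nat_iff_bounded by (metis finite_imageI)
  then have "(\<Sum>n\<in>nat ` S. 1/(real n + 1)^2) \<le> (\<Sum>n<N. 1/(real n + 1)^2)"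
    by (intro sum_mono2) auto
  also have "\<dots> \<le> 2" by (rule inv_sq_nat)
  finally show ?thesis .
qed

lemma inv_sq_int:
  assumes "finite T"
  shows "(\<Sum>u\<in>T. 1/(1+\<bar>real_of_int u\<bar>)^2) \<le> 4"
proof -
  let ?f = "\<lambda>u::int. 1/(1+\<bar>real_of_int u\<bar>)^2"
  have split: "sum ?f T = sum ?f (T \<inter> {0..}) + sum ?f (T - {0..})"
    using assms by (metis sum.Int_Diff)
  have "sum ?f (T \<inter> {0..}) \<le> 2" using assms by (intro inv_sq_nonneg_int) auto
  moreover have "sum ?f (T - {0..}) = sum ?f (uminus ` (T - {0..}))"
    by (subst sum.reindex) (auto intro: inj_onI)
  moreover have "sum ?f (uminus ` (T - {0..})) \<le> 2" using assms by (intro inv_sq_nonneg_int) auto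
  ultimately show ?thesis using split by linarith
qed

lemma inv_sq_aux:
  fixes A B :: real
  assumes "0 < A" "0 < B" "A \<le> 2 * B"
  shows "1/B^2 \<le> 4 * (1/A^2)"
proof -
  have "A^2 \<le> (2*B)^2" using assms by (intro power_mono) auto
  then have "A^2 \<le> 4 * B^2" by (simp add: power_mult_distrib)
  then have "1/(4*B^2) \<le> 1/A^2" using assms by (intro divide_left_mono) auto
  then show ?thesis by (simp add: field_simps)
qed

lemma inv_sq_shift:
  assumes "finite T"
  shows "(\<Sum>t\<in>T. 1/(1+\<bar>y - real_of_int t\<bar>)^2) \<le> 16"
proof -
  define a where "a = \<lfloor>y\<rfloor>"
  have "\<And>t. 1/(1+\<bar>y - real_of_int t\<bar>)^2 \<le> 4 * (1/(1+\<bar>real_of_int (t - a)\<bar>)^2)"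
  proof -
    fix t
    have h: "1 + \<bar>real_of_int (t - a)\<bar> \<le> 2 * (1 + \<bar>y - real_of_int t\<bar>)"
      unfolding a_def using floor_le_iff[of y] le_floor_iff[of _ y]
      by (smt (verit, ccfv_SIG) of_int_diff of_int_floor_le real_of_int_floor_add_one_gt)
    show "1/(1+\<bar>y - real_of_int t\<bar>)^2 \<le> 4 * (1/(1+\<bar>real_of_int (t - a)\<bar>)^2)"
      by (rule inv_sq_aux[OF _ _ h]) auto
  qed
  then have "(\<Sum>t\<in>T. 1/(1+\<bar>y - real_of_int t\<bar>)^2) \<le> 4 * (\<Sum>t\<in>T. 1/(1+\<bar>real_of_int (t - a)\<bar>)^2)"
    by (simp add: sum_distrib_left sum_mono)
  moreover have "(\<Sum>t\<in>T. 1/(1+\<bar>real_of_int (t - a)\<bar>)^2) = (\<Sum>u\<in>(\<lambda>t. t - a) ` T. 1/(1+\<bar>real_of_int u\<bar>)^2)"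
    by (subst sum.reindex) (auto intro: inj_onI)
  moreover have "(\<Sum>u\<in>(\<lambda>t. t - a) ` T. 1/(1+\<bar>real_of_int u\<bar>)^2) \<le> 4" using assms by (intro inv_sq_int) auto
  ultimately show ?thesis by linarith
qed


lemma supnorm_ge: "\<bar>x $ m\<bar> \<le> supnorm x"
  unfolding supnorm_def by (rule Max_ge) auto

lemma supnorm_nonneg: "0 \<le> supnorm x"
  using supnorm_ge[of x undefined] by linarith

lemma supnorm_lt: "supnorm x < r \<longleftrightarrow> (\<forall>m. \<bar>x $ m\<bar> < r)"
  unfolding supnorm_def by (subst Max_less_iff) auto

lemma decay_prod:
  fixes v :: "real^'n"
  shows "(1 + supnorm v) powr (- real (2 * CARD('n))) \<le> (\<Prod>m\<in>UNIV. 1/(1+\<bar>v $ m\<bar>)^2)"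
proof -
  have pos: "0 < 1 + supnorm v" using supnorm_nonneg[of v] by linarith
  have "(1 + supnorm v) powr (- real (2 * CARD('n))) = 1 / (1 + supnorm v) ^ (2 * CARD('n))"
    using pos by (simp only: powr_minus powr_realpow[OF pos] divide_inverse mult_1)
  also have "\<dots> = (\<Prod>m\<in>(UNIV::'n set). 1/(1+supnorm v)^2)"
    by (simp add: power_mult power_one_over)
  also have "\<dots> \<le> (\<Prod>m\<in>UNIV. 1/(1+\<bar>v $ m\<bar>)^2)"
  proof (rule prod_mono)
    fix m :: 'n
    have "(1+\<bar>v $ m\<bar>)^2 \<le> (1+supnorm v)^2"
      using supnorm_ge[of v m] by (intro power_mono) auto
    then show "0 \<le> 1/(1+supnorm v)^2 \<and> 1/(1+supnorm v)^2 \<le> 1/(1+\<bar>v $ m\<bar>)^2"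
      using pos by (auto intro!: divide_left_mono mult_pos_pos simp: add_pos_nonneg)
  qed
  finally show ?thesis .
qed

lemma sum_prod_box:
  fixes h :: "'n::finite \<Rightarrow> int \<Rightarrow> real"
  assumes "finite F" "\<And>m t. 0 \<le> h m t"
  shows "(\<Sum>k\<in>F. \<Prod>m\<in>UNIV. h m (k $ m)) \<le> (\<Prod>m\<in>UNIV. \<Sum>t\<in>(\<lambda>k. k $ m) ` F. h m t)"
proof -
  define G where "G m = (\<lambda>k. k $ m) ` F" for m
  have finG: "finite (G m)" for m using assms(1) by (simp add: G_def)
  have sub: "F \<subseteq> vec_lambda ` (PiE UNIV G)"
  proof
    fix k assume "k \<in> F"
    then have "(\<lambda>m. k $ m) \<in> PiE UNIV G" by (auto simp: G_def)
    moreover have "k = vec_lambda (\<lambda>m. k $ m)" by simp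
    ultimately show "k \<in> vec_lambda ` (PiE UNIV G)" by blast
  qed
  have inj: "inj_on vec_lambda (PiE UNIV G)"
    by (intro inj_onI) (metis vec_lambda_inverse UNIV_I)
  have fin: "finite (vec_lambda ` (PiE UNIV G))"
    using finG by (intro finite_imageI finite_PiE) auto
  have "(\<Sum>k\<in>F. \<Prod>m\<in>UNIV. h m (k $ m)) \<le> (\<Sum>k\<in>vec_lambda ` (PiE UNIV G). \<Prod>m\<in>UNIV. h m (k $ m))"
    using sub fin assms(2) by (intro sum_mono2) (auto intro: prod_nonneg)
  also have "\<dots> = (\<Sum>g\<in>PiE UNIV G. \<Prod>m\<in>UNIV. h m (g m))"
    by (subst sum.reindex[OF inj]) simp
  also have "\<dots> = (\<Prod>m\<in>UNIV. \<Sum>t\<in>G m. h m t)"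
    using finG by (subst prod_sum_PiE) auto
  finally show ?thesis by (simp add: G_def)
qed

lemma lattice_fin:
  fixes y :: "real^'n"
  assumes "finite F"
  shows "(\<Sum>k\<in>F. (1 + supnorm (y - ivec k)) powr (- real (2 * CARD('n)))) \<le> 16 ^ CARD('n)"
proof -
  have "(\<Sum>k\<in>F. (1 + supnorm (y - ivec k)) powr (- real (2 * CARD('n))))
      \<le> (\<Sum>k\<in>F. \<Prod>m\<in>UNIV. 1/(1+\<bar>y $ m - real_of_int (k $ m)\<bar>)^2)"
  proof (intro sum_mono)
    fix k
    show "(1 + supnorm (y - ivec k)) powr (- real (2 * CARD('n))) \<le> (\<Prod>m\<in>UNIV. 1/(1+\<bar>y $ m - real_of_int (k $ m)\<bar>)^2)"
      using decay_prod[of "y - ivec k"] by (simp add: ivec_def)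
  qed
  also have "\<dots> \<le> (\<Prod>m\<in>UNIV. \<Sum>t\<in>(\<lambda>k. k $ m) ` F. 1/(1+\<bar>y $ m - real_of_int t\<bar>)^2)"
    using assms by (intro sum_prod_box) auto
  also have "\<dots> \<le> (\<Prod>m\<in>(UNIV::'n set). 16)"
    using assms by (intro prod_mono) (auto intro: sum_nonneg inv_sq_shift)
  also have "\<dots> = 16 ^ CARD('n)" by simp
  finally show ?thesis .
qed

lemma lattice:
  fixes y :: "real^'n"
  shows "(\<lambda>k. (1 + supnorm (y - ivec k)) powr (- real (2 * CARD('n)))) summable_on UNIV"
    and "(\<Sum>\<^sub>\<infinity>k. (1 + supnorm (y - ivec k)) powr (- real (2 * CARD('n)))) \<le> 16 ^ CARD('n)"
proof -
  show s: "(\<lambda>k. (1 + supnorm (y - ivec k)) powr (- real (2 * CARD('n)))) summable_on UNIV"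
  proof (rule nonneg_bdd_above_summable_on)
    show "bdd_above (sum (\<lambda>k. (1 + supnorm (y - ivec k)) powr (- real (2 * CARD('n)))) ` {F. F \<subseteq> UNIV \<and> finite F})"
      by (rule bdd_aboveI[where M="16 ^ CARD('n)"]) (use lattice_fin in blast)
  qed simp
  show "(\<Sum>\<^sub>\<infinity>k. (1 + supnorm (y - ivec k)) powr (- real (2 * CARD('n)))) \<le> 16 ^ CARD('n)"
    by (rule infsum_le_finite_sums[OF s]) (rule lattice_fin)
qed

lemma dcube_self: "x \<in> dcube j (cube_idx j x)"
proof -
  have p: "(0::real) < 2 ^ j" by simp
  show ?thesis unfolding dcube_def cube_idx_def
  proof (intro CollectI allI conjI)
    fix m
    show "real_of_int ((\<chi> m. \<lfloor>2 ^ j * x $ m\<rfloor>) $ m) / 2 ^ j \<le> x $ m"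
      using p by (simp add: pos_divide_le_eq mult.commute)
    show "x $ m < (real_of_int ((\<chi> m. \<lfloor>2 ^ j * x $ m\<rfloor>) $ m) + 1) / 2 ^ j"
      using p by (simp add: pos_less_divide_eq mult.commute)
  qed
qed

lemma far_bound:
  fixes x :: "real^'n"
  assumes "k \<notin> Lam_near l j (cube_idx j x) \<epsilon>"
  shows "2 powr (\<epsilon> * real l) \<le> supnorm ((2 ^ l) *\<^sub>R x - ivec k)"
proof (rule ccontr)
  assume "\<not> ?thesis"
  then have "supnorm ((2 ^ l) *\<^sub>R x - ivec k) < 2 powr (\<epsilon> * real l)" by simp
  then have lt: "\<And>m. \<bar>2 ^ l * x $ m - real_of_int (k $ m)\<bar> < 2 powr (\<epsilon> * real l)"
    unfolding supnorm_lt by (simp add: ivec_def)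
  have p: "(0::real) < 2 ^ l" by simp
  have pl: "(2::real) ^ l = 2 powr real l" by (simp add: powr_realpow)
  define a :: "real^'n" where "a = (\<chi> m. real_of_int (k $ m) / 2 ^ l)"
  define b where "b = x - a"
  have a: "a \<in> dcube l k" unfolding dcube_def a_def
    using p by (auto simp: divide_strict_right_mono)
  have b: "supnorm b < 2 powr (- (1 - \<epsilon>) * real l)"
  proof (subst supnorm_lt, intro allI)
    fix m
    have "b $ m = (2 ^ l * x $ m - real_of_int (k $ m)) / 2 ^ l"
      unfolding b_def a_def using p by (simp add: diff_divide_distrib)
    then have "\<bar>b $ m\<bar> = \<bar>2 ^ l * x $ m - real_of_int (k $ m)\<bar> / 2 ^ l"
      by (simp add: abs_divide)
    also have "\<dots> < 2 powr (\<epsilon> * real l) / 2 ^ l"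
      using lt[of m] p by (simp add: divide_strict_right_mono)
    also have "\<dots> = 2 powr (- (1 - \<epsilon>) * real l)"
      unfolding pl by (simp add: powr_diff[symmetric] algebra_simps)
    finally show "\<bar>b $ m\<bar> < 2 powr (- (1 - \<epsilon>) * real l)" .
  qed
  have "x \<in> {a + b | a b. a \<in> dcube l k \<and> supnorm b < 2 powr (- (1 - \<epsilon>) * real l)}"
    using a b unfolding b_def by force
  then have "k \<in> Lam_near l j (cube_idx j x) \<epsilon>"
    unfolding Lam_near_def using dcube_self[of x j] by blast
  then show False using assms by blast
qed

lemma finite_box:
  fixes S :: "int set"
  assumes "finite S"
  shows "finite {k::int^'n. \<forall>m. k $ m \<in> S}"
proof -
  have "{k::int^'n. \<forall>m. k $ m \<in> S} \<subseteq> vec_lambda ` (PiE UNIV (\<lambda>_. S))"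
  proof
    fix k :: "int^'n" assume "k \<in> {k. \<forall>m. k $ m \<in> S}"
    then have "(\<lambda>m. k $ m) \<in> PiE UNIV (\<lambda>_. S)" by auto
    moreover have "k = vec_lambda (\<lambda>m. k $ m)" by simp
    ultimately show "k \<in> vec_lambda ` (PiE UNIV (\<lambda>_. S))" by blast
  qed
  moreover have "finite (vec_lambda ` (PiE UNIV (\<lambda>_::'n. S)))"
    using assms by (intro finite_imageI finite_PiE) auto
  ultimately show ?thesis by (rule finite_subset)
qed

lemma Lam_near_finite: "finite (Lam_near l j (k0::int^'n) \<epsilon>)"
proof -
  define r where "r = 2 powr (- (1 - \<epsilon>) * real l)"
  define M where "M = 2 ^ l * (supnorm (ivec k0) + 1 + r) + 1"
  have pl: "(0::real) < 2 ^ l" and pj: "(1::real) \<le> 2 ^ j" by simp_all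
  have bnd: "\<bar>real_of_int (k $ m)\<bar> \<le> M" if k: "k \<in> Lam_near l j k0 \<epsilon>" for k m
  proof -
    obtain a b where a: "a \<in> dcube l k" and b: "supnorm b < r" and ab: "a + b \<in> dcube j k0"
      using k unfolding Lam_near_def r_def by blast
    have a1: "real_of_int (k $ m) \<le> 2 ^ l * a $ m" and a2: "2 ^ l * a $ m < real_of_int (k $ m) + 1"
      using a pl unfolding dcube_def by (auto simp: pos_divide_le_eq pos_less_divide_eq mult.commute)
    have b1: "\<bar>b $ m\<bar> < r" using b supnorm_lt by blast
    have c1: "real_of_int (k0 $ m) \<le> 2 ^ j * (a $ m + b $ m)" and c2: "2 ^ j * (a $ m + b $ m) < real_of_int (k0 $ m) + 1"
      using ab unfolding dcube_def by (auto simp: pos_divide_le_eq pos_less_divide_eq mult.commute)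
    have k0b: "\<bar>real_of_int (k0 $ m)\<bar> \<le> supnorm (ivec k0)"
      using supnorm_ge[of "ivec k0" m] by (simp add: ivec_def)
    have "\<bar>a $ m + b $ m\<bar> \<le> \<bar>real_of_int (k0 $ m)\<bar> + 1"
    proof -
      have "\<bar>2 ^ j * (a $ m + b $ m)\<bar> \<le> \<bar>real_of_int (k0 $ m)\<bar> + 1" using c1 c2 by linarith
      moreover have "\<bar>a $ m + b $ m\<bar> \<le> \<bar>2 ^ j * (a $ m + b $ m)\<bar>"
        using pj by (simp add: abs_mult mult_le_cancel_right1)
      ultimately show ?thesis by linarith
    qed
    then have "\<bar>a $ m\<bar> \<le> supnorm (ivec k0) + 1 + r" using b1 k0b by linarith
    then have "2 ^ l * \<bar>a $ m\<bar> \<le> 2 ^ l * (supnorm (ivec k0) + 1 + r)"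
      using pl by (intro mult_left_mono) auto
    moreover have "\<bar>real_of_int (k $ m)\<bar> \<le> 2 ^ l * \<bar>a $ m\<bar> + 1"
    proof -
      have "\<bar>2 ^ l * a $ m\<bar> = 2 ^ l * \<bar>a $ m\<bar>" by (simp add: abs_mult)
      then show ?thesis using a1 a2 by linarith
    qed
    ultimately show ?thesis unfolding M_def by linarith
  qed
  have "Lam_near l j k0 \<epsilon> \<subseteq> {k::int^'n. \<forall>m. k $ m \<in> {-\<lceil>M\<rceil>..\<lceil>M\<rceil>}}"
  proof (intro subsetI CollectI allI)
    fix k m assume "k \<in> Lam_near l j k0 \<epsilon>"
    from bnd[OF this, of m] have h: "real_of_int (k $ m) \<le> real_of_int \<lceil>M\<rceil>" "real_of_int (- \<lceil>M\<rceil>) \<le> real_of_int (k $ m)"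
      using le_of_int_ceiling[of M] by linarith+
    then show "k $ m \<in> {-\<lceil>M\<rceil>..\<lceil>M\<rceil>}" unfolding of_int_le_iff by simp
  qed
  then show ?thesis using finite_box[of "{-\<lceil>M\<rceil>..\<lceil>M\<rceil>}"] finite_subset by blast
qed

lemma infsum_norm_bound:
  fixes g :: "'a \<Rightarrow> complex" and w :: "'a \<Rightarrow> real"
  assumes "w summable_on UNIV" "infsum w UNIV \<le> K" "0 \<le> M" "\<And>k. norm (g k) \<le> M * w k"
  shows "norm (infsum g UNIV) \<le> M * K"
proof -
  have mw: "(\<lambda>k. M * w k) summable_on UNIV" using assms(1) by (rule summable_on_cmult_right)
  have "(\<lambda>k. norm (g k)) summable_on UNIV"
    by (rule summable_on_comparison_test[OF mw]) (use assms(4) in auto)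
  then have gs: "g summable_on UNIV" by (rule abs_summable_summable)
  have "norm (infsum g UNIV) \<le> infsum (\<lambda>k. M * w k) UNIV"
    by (rule norm_infsum_le[OF has_sum_infsum[OF gs] has_sum_infsum[OF mw]]) (use assms(4) in auto)
  also have "\<dots> = M * infsum w UNIV" by (rule infsum_cmult_right')
  also have "\<dots> \<le> M * K" using assms(2,3) by (rule mult_left_mono)
  finally show ?thesis .
qed

lemma coef_bound:
  fixes \<psi> :: "nat \<Rightarrow> real^'n \<Rightarrow> complex"
  assumes f: "f \<in> besov \<phi> \<psi> s p" and p: "p \<ge> 1"
  obtains B where "0 \<le> B"
    "\<And>i l k. i \<in> widx TYPE('n) \<Longrightarrow> cmod (wcoef \<psi> f i l k) \<le> B * 2 powr ((real CARD('n)/p - s) * real l)"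
proof -
  let ?S = "\<lambda>j. (\<Sum>i\<in>widx TYPE('n). \<Sum>\<^sub>\<infinity>k. cmod (wcoef \<psi> f i j k) powr p)"
  from f obtain B where B: "\<And>j. 2 powr ((s - real CARD('n) / p) * real j) * ?S j powr (1 / p) \<le> B"
    and summ: "\<And>i j. i \<in> widx TYPE('n) \<Longrightarrow> (\<lambda>k. cmod (wcoef \<psi> f i j k) powr p) summable_on UNIV"
    unfolding besov_def by blast
  have B0: "0 \<le> B" using B[of 0] by (smt (verit) mult_nonneg_nonneg powr_ge_zero)
  show ?thesis
  proof (rule that[OF B0])
    fix i l k assume i: "i \<in> widx TYPE('n)"
    have h1: "cmod (wcoef \<psi> f i l k) powr p \<le> (\<Sum>\<^sub>\<infinity>k'. cmod (wcoef \<psi> f i l k') powr p)"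
    proof -
      have "infsum (\<lambda>k'. cmod (wcoef \<psi> f i l k') powr p) {k} \<le> infsum (\<lambda>k'. cmod (wcoef \<psi> f i l k') powr p) UNIV"
        by (rule infsum_mono_neutral) (use summ[OF i] in auto)
      then show ?thesis by simp
    qed
    have h2: "(\<Sum>\<^sub>\<infinity>k'. cmod (wcoef \<psi> f i l k') powr p) \<le> ?S l"
      by (rule member_le_sum[OF i]) (auto intro: infsum_nonneg)
    have "cmod (wcoef \<psi> f i l k) = (cmod (wcoef \<psi> f i l k) powr p) powr (1/p)"
      using p by (simp add: powr_powr)
    also have "\<dots> \<le> ?S l powr (1/p)"
      using h1 h2 p by (intro powr_mono2) auto
    finally have h3: "cmod (wcoef \<psi> f i l k) \<le> ?S l powr (1/p)" .
    have e: "2 powr ((real CARD('n)/p - s) * real l) * 2 powr ((s - real CARD('n) / p) * real l) = 1"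
      by (simp add: powr_add[symmetric] algebra_simps)
    have "?S l powr (1/p) = 2 powr ((real CARD('n)/p - s) * real l) * (2 powr ((s - real CARD('n) / p) * real l) * ?S l powr (1 / p))"
      using e by (simp add: mult.assoc[symmetric])
    also have "\<dots> \<le> 2 powr ((real CARD('n)/p - s) * real l) * B"
      using B[of l] by (intro mult_left_mono) auto
    finally show "cmod (wcoef \<psi> f i l k) \<le> B * 2 powr ((real CARD('n)/p - s) * real l)"
      using h3 by (simp add: mult.commute)
  qed
qed

lemma near_coef:
  fixes \<psi> :: "nat \<Rightarrow> real^'n \<Rightarrow> complex"
  assumes i: "i \<in> widx TYPE('n)" and k: "k \<in> Lam_near l j k0 \<epsilon>" and p: "p \<ge> 1"
  shows "cmod (wcoef \<psi> f i l k) \<le> 2 powr ((real CARD('n)/p - s) * real l) * locnorm \<psi> f s p l j k0 \<epsilon>"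
proof -
  define t where "t = 2 powr ((s - real CARD('n) / p) * real l)"
  have t: "0 < t" by (simp add: t_def)
  let ?g = "\<lambda>i k. cmod (wcoef \<psi> f i l k * complex_of_real t) powr p"
  have fin: "finite (Lam_near l j k0 \<epsilon>)" by (rule Lam_near_finite)
  have "?g i k \<le> (\<Sum>k\<in>Lam_near l j k0 \<epsilon>. ?g i k)"
    by (rule member_le_sum[OF k]) (auto simp: fin)
  also have "\<dots> \<le> (\<Sum>i\<in>widx TYPE('n). \<Sum>k\<in>Lam_near l j k0 \<epsilon>. ?g i k)"
    by (rule member_le_sum[OF i, where f="\<lambda>i. \<Sum>k\<in>Lam_near l j k0 \<epsilon>. ?g i k"]) (auto intro: sum_nonneg)
  finally have h: "?g i k \<le> (\<Sum>i\<in>widx TYPE('n). \<Sum>k\<in>Lam_near l j k0 \<epsilon>. ?g i k)" .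
  have "cmod (wcoef \<psi> f i l k * complex_of_real t) = (?g i k) powr (1/p)"
    using p by (simp add: powr_powr)
  also have "\<dots> \<le> locnorm \<psi> f s p l j k0 \<epsilon>"
    unfolding locnorm_def t_def[symmetric] using h p by (intro powr_mono2) auto
  finally have "cmod (wcoef \<psi> f i l k) * t \<le> locnorm \<psi> f s p l j k0 \<epsilon>"
    using t by (simp add: norm_mult)
  then have "cmod (wcoef \<psi> f i l k) \<le> locnorm \<psi> f s p l j k0 \<epsilon> / t"
    using t by (simp add: pos_le_divide_eq)
  also have "locnorm \<psi> f s p l j k0 \<epsilon> / t = 2 powr ((real CARD('n)/p - s) * real l) * locnorm \<psi> f s p l j k0 \<epsilon>"
    unfolding t_def by (simp add: powr_minus_divide[symmetric] algebra_simps divide_inverse powr_minus[symmetric])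
  finally show ?thesis .
qed

lemma exp_E1:
  fixes a e jr lr :: real
  assumes "0 \<le> e" "0 \<le> jr" "(1 - e) * jr \<le> lr" "lr \<le> (1 + e) * jr"
  shows "a * lr \<le> (a + (\<bar>a\<bar> + 1) * e) * jr"
proof -
  have d: "\<bar>lr - jr\<bar> \<le> e * jr" using assms by (auto simp: algebra_simps abs_le_iff)
  have "a * (lr - jr) \<le> \<bar>a\<bar> * \<bar>lr - jr\<bar>" by (simp add: abs_mult[symmetric])
  also have "\<dots> \<le> \<bar>a\<bar> * (e * jr)" using d by (intro mult_left_mono) auto
  finally have "a * (lr - jr) \<le> \<bar>a\<bar> * (e * jr)" .
  moreover have "0 \<le> e * jr" using assms by simp
  ultimately show ?thesis by (simp add: algebra_simps)
qed

lemma exp_E2: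
  fixes a q e jr lr \<kappa> :: real
  assumes "0 < e" "e < 1" "0 \<le> jr" "0 \<le> lr" "(1 - e) * jr \<le> lr" "q \<ge> \<bar>a\<bar> + \<bar>\<kappa>\<bar> / (1 - e)"
  shows "a * lr - q * lr \<le> \<kappa> * jr"
proof -
  define c where "c = \<bar>\<kappa>\<bar> / (1 - e)"
  have c0: "0 \<le> c" using assms by (simp add: c_def)
  have "a * lr \<le> \<bar>a\<bar> * lr" using assms by (intro mult_right_mono) auto
  then have "a * lr - q * lr \<le> (\<bar>a\<bar> - q) * lr" by (simp add: algebra_simps)
  also have "\<dots> \<le> (- c) * lr" using assms by (intro mult_right_mono) (auto simp: c_def)
  also have "\<dots> \<le> (- c) * ((1 - e) * jr)" using assms c0 by (intro mult_left_mono_neg) auto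
  also have "\<dots> = - \<bar>\<kappa>\<bar> * jr" using assms by (simp add: c_def)
  also have "\<dots> \<le> \<kappa> * jr" using assms by (intro mult_right_mono) auto
  finally show ?thesis .
qed

theorem lemma3p5:
  fixes s p :: real
  assumes "s \<ge> 0" and "p \<ge> 1"
  shows "\<exists>\<theta>::real \<Rightarrow> real. (\<forall>e>0. \<theta> e > 0) \<and> (\<theta> \<longlongrightarrow> 0) (at_right 0) \<and>
    (\<forall>(\<phi>::real^'n \<Rightarrow> complex) \<psi>. wavelet_setup \<phi> \<psi> \<longrightarrow>
      (\<forall>f \<in> besov \<phi> \<psi> s p. \<forall>\<kappa>::real. \<forall>\<epsilon>. 0 < \<epsilon> \<and> \<epsilon> < 1 \<longrightarrow>
        (\<exists>C>0. \<forall>(x::real^'n) (j::nat) (l::nat).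
           (1 - \<epsilon>) * real j \<le> real l \<and> real l \<le> (1 + \<epsilon>) * real j \<longrightarrow>
           cmod (Qop \<psi> f l x)
             \<le> C * 2 powr ((real CARD('n) / p - s + \<theta> \<epsilon>) * real j)
                   * locnorm \<psi> f s p l j (cube_idx j x) \<epsilon>
               + C * 2 powr (\<kappa> * real j))))"
proof -
  define d where "d = real CARD('n)"
  define a where "a = d / p - s"
  define \<theta> where "\<theta> = (\<lambda>e::real. (\<bar>a\<bar> + 1) * e)"
  have th1: "\<forall>e>0. \<theta> e > 0" unfolding \<theta>_def
    by (auto intro!: mult_pos_pos simp: add_nonneg_pos)
  have "((\<lambda>e::real. (\<bar>a\<bar> + 1) * e) \<longlongrightarrow> (\<bar>a\<bar> + 1) * 0) (at_right 0)"
    by (intro tendsto_intros)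
  then have th2: "(\<theta> \<longlongrightarrow> 0) (at_right 0)" unfolding \<theta>_def by simp
  show ?thesis
  proof (rule exI[of _ \<theta>], intro conjI th1 th2 allI impI ballI)
    fix \<phi> :: "real^'n \<Rightarrow> complex" and \<psi> :: "nat \<Rightarrow> real^'n \<Rightarrow> complex"
    assume ws: "wavelet_setup \<phi> \<psi>"
    fix f assume f: "f \<in> besov \<phi> \<psi> s p"
    fix \<kappa> :: real and \<epsilon> :: real
    assume eps: "0 < \<epsilon> \<and> \<epsilon> < 1"
    then have e0: "0 < \<epsilon>" and e1: "\<epsilon> < 1" by auto
    have decay: "\<forall>i\<in>widx TYPE('n). \<forall>N::nat. \<exists>CN. \<forall>x. cmod (\<psi> i x) \<le> CN * (1 + supnorm x) powr (- real N)"
      using ws unfolding wavelet_setup_def by blast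
    define N0 :: nat where "N0 = 2 * CARD('n) + nat \<lceil>(\<bar>a\<bar> + \<bar>\<kappa>\<bar> / (1 - \<epsilon>)) / \<epsilon>\<rceil>"
    define D :: nat where "D = 2 * CARD('n)"
    have "\<forall>i\<in>widx TYPE('n). \<exists>c. \<forall>x. cmod (\<psi> i x) \<le> c * (1 + supnorm x) powr (- real D)"
      using decay by blast
    from bchoice[OF this] obtain C1 where C1a: "\<forall>i\<in>widx TYPE('n). \<forall>x. cmod (\<psi> i x) \<le> C1 i * (1 + supnorm x) powr (- real D)"
      by blast
    have C1: "\<And>i x. i \<in> widx TYPE('n) \<Longrightarrow> cmod (\<psi> i x) \<le> C1 i * (1 + supnorm x) powr (- real D)"
      using C1a by blast
    have "\<forall>i\<in>widx TYPE('n). \<exists>c. \<forall>x. cmod (\<psi> i x) \<le> c * (1 + supnorm x) powr (- real N0)"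
      using decay by blast
    from bchoice[OF this] obtain C2 where C2a: "\<forall>i\<in>widx TYPE('n). \<forall>x. cmod (\<psi> i x) \<le> C2 i * (1 + supnorm x) powr (- real N0)"
      by blast
    have C2: "\<And>i x. i \<in> widx TYPE('n) \<Longrightarrow> cmod (\<psi> i x) \<le> C2 i * (1 + supnorm x) powr (- real N0)"
      using C2a by blast
    have pos1: "\<And>x::real^'n. 0 < 1 + supnorm x" using supnorm_nonneg by (metis add_pos_nonneg zero_less_one)
    have nonneg_c: "0 \<le> c" if "\<And>x::real^'n. 0 \<le> c * (1 + supnorm x) powr r" for c r
    proof -
      have "0 \<le> c * (1 + supnorm (0::real^'n)) powr r" by (rule that)
      moreover have "0 < (1 + supnorm (0::real^'n)) powr r" using pos1[of 0] by simp
      ultimately show ?thesis by (simp add: zero_le_mult_iff)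
    qed
    have C1nn: "0 \<le> C1 i" if "i \<in> widx TYPE('n)" for i
    proof (rule nonneg_c)
      fix x :: "real^'n"
      show "0 \<le> C1 i * (1 + supnorm x) powr (- real D)"
        using C1[OF that, of x] norm_ge_zero[of "\<psi> i x"] by linarith
    qed
    have C2nn: "0 \<le> C2 i" if "i \<in> widx TYPE('n)" for i
    proof (rule nonneg_c)
      fix x :: "real^'n"
      show "0 \<le> C2 i * (1 + supnorm x) powr (- real N0)"
        using C2[OF that, of x] norm_ge_zero[of "\<psi> i x"] by linarith
    qed
    obtain B where B0: "0 \<le> B" and B: "\<And>i l k. i \<in> widx TYPE('n) \<Longrightarrow> cmod (wcoef \<psi> f i l k) \<le> B * 2 powr (a * real l)"
      using coef_bound[OF f assms(2)] unfolding a_def d_def by metis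
    define q where "q = \<epsilon> * (real N0 - real D)"
    have q: "q \<ge> \<bar>a\<bar> + \<bar>\<kappa>\<bar> / (1 - \<epsilon>)"
    proof -
      have "real N0 - real D \<ge> (\<bar>a\<bar> + \<bar>\<kappa>\<bar> / (1 - \<epsilon>)) / \<epsilon>"
        unfolding N0_def D_def by (simp add: of_nat_nat) linarith
      then have "\<epsilon> * (real N0 - real D) \<ge> \<epsilon> * ((\<bar>a\<bar> + \<bar>\<kappa>\<bar> / (1 - \<epsilon>)) / \<epsilon>)"
        using e0 by (intro mult_left_mono) auto
      then show ?thesis using e0 unfolding q_def by simp
    qed
    have ND: "real D \<le> real N0" unfolding N0_def D_def by simp
    define K :: real where "K = 16 ^ CARD('n)"
    define SC1 where "SC1 = (\<Sum>i\<in>widx TYPE('n). C1 i)"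
    define SC2 where "SC2 = (\<Sum>i\<in>widx TYPE('n). C2 i)"
    have SC1: "0 \<le> SC1" unfolding SC1_def using C1nn by (auto intro: sum_nonneg)
    have SC2: "0 \<le> SC2" unfolding SC2_def using C2nn by (auto intro: sum_nonneg)
    have K0: "0 \<le> K" unfolding K_def by simp
    define C where "C = K * SC1 + K * SC2 * B + 1"
    have KS1: "0 \<le> K * SC1" using K0 SC1 by simp
    have KS2: "0 \<le> K * SC2 * B" using K0 SC2 B0 by simp
    have Cpos: "C > 0" unfolding C_def using KS1 KS2 by linarith
    show "\<exists>C>0. \<forall>(x::real^'n) (j::nat) (l::nat).
           (1 - \<epsilon>) * real j \<le> real l \<and> real l \<le> (1 + \<epsilon>) * real j \<longrightarrow>
           cmod (Qop \<psi> f l x)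
             \<le> C * 2 powr ((real CARD('n) / p - s + \<theta> \<epsilon>) * real j)
                   * locnorm \<psi> f s p l j (cube_idx j x) \<epsilon>
               + C * 2 powr (\<kappa> * real j)"
    proof (intro exI[of _ C] conjI Cpos allI impI)
      fix x :: "real^'n" and j l :: nat
      assume jl: "(1 - \<epsilon>) * real j \<le> real l \<and> real l \<le> (1 + \<epsilon>) * real j"
      define y where "y = (2 ^ l) *\<^sub>R x"
      define w where "w = (\<lambda>k. (1 + supnorm (y - ivec k)) powr (- real (2 * CARD('n))))"
      define L where "L = locnorm \<psi> f s p l j (cube_idx j x) \<epsilon>"
      have L0: "0 \<le> L" unfolding L_def locnorm_def by simp
      have w0: "0 \<le> w k" for k unfolding w_def by simp
      define P where "P = 2 powr (a * real l)"
      define R where "R = 2 powr (a * real l - q * real l)"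
      have P0: "0 \<le> P" and R0: "0 \<le> R" unfolding P_def R_def by simp_all
      have tb: "norm (wcoef \<psi> f i l k * psi_at \<psi> i l k x) \<le> (C1 i * P * L + C2 i * B * R) * w k"
        if i: "i \<in> widx TYPE('n)" for i k
      proof -
        have nm: "norm (wcoef \<psi> f i l k * psi_at \<psi> i l k x) = cmod (wcoef \<psi> f i l k) * cmod (\<psi> i (y - ivec k))"
          unfolding psi_at_def y_def by (simp add: norm_mult)
        show ?thesis
        proof (cases "k \<in> Lam_near l j (cube_idx j x) \<epsilon>")
          case True
          have c: "cmod (wcoef \<psi> f i l k) \<le> P * L"
            using near_coef[OF i True assms(2), of \<psi> f s] unfolding P_def L_def a_def d_def .
          have ps: "cmod (\<psi> i (y - ivec k)) \<le> C1 i * w k"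
            using C1[OF i, of "y - ivec k"] unfolding w_def D_def .
          have "cmod (wcoef \<psi> f i l k) * cmod (\<psi> i (y - ivec k)) \<le> (P * L) * (C1 i * w k)"
            using c ps by (intro mult_mono) (auto intro: mult_nonneg_nonneg P0 L0)
          also have "\<dots> = (C1 i * P * L) * w k" by (simp add: algebra_simps)
          also have "\<dots> \<le> (C1 i * P * L + C2 i * B * R) * w k"
            using C2nn[OF i] B0 R0 w0[of k] by (intro mult_right_mono) auto
          finally show ?thesis using nm by simp
        next
          case False
          have fb: "2 powr (\<epsilon> * real l) \<le> supnorm (y - ivec k)"
            using far_bound[OF False] unfolding y_def .
          have c: "cmod (wcoef \<psi> f i l k) \<le> B * P" using B[OF i] unfolding P_def .
          have pos: "0 < 1 + supnorm (y - ivec k)" by (rule pos1)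
          have split: "(1 + supnorm (y - ivec k)) powr (- real N0)
              = w k * (1 + supnorm (y - ivec k)) powr (- (real N0 - real D))"
            unfolding w_def D_def by (simp add: powr_add[symmetric])
          have "(1 + supnorm (y - ivec k)) powr (- (real N0 - real D)) \<le> (2 powr (\<epsilon> * real l)) powr (- (real N0 - real D))"
            using fb ND by (intro powr_mono2') auto
          also have "\<dots> = 2 powr (- q * real l)" unfolding q_def by (simp add: powr_powr algebra_simps)
          finally have t: "(1 + supnorm (y - ivec k)) powr (- (real N0 - real D)) \<le> 2 powr (- q * real l)" .
          have ps: "cmod (\<psi> i (y - ivec k)) \<le> C2 i * (w k * 2 powr (- q * real l))"
          proof -
            have "cmod (\<psi> i (y - ivec k)) \<le> C2 i * (1 + supnorm (y - ivec k)) powr (- real N0)"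
              by (rule C2[OF i])
            also have "\<dots> \<le> C2 i * (w k * 2 powr (- q * real l))"
              unfolding split using t w0[of k] C2nn[OF i] by (intro mult_left_mono) auto
            finally show ?thesis .
          qed
          have "cmod (wcoef \<psi> f i l k) * cmod (\<psi> i (y - ivec k)) \<le> (B * P) * (C2 i * (w k * 2 powr (- q * real l)))"
            using c ps B0 P0 by (intro mult_mono) auto
          also have "\<dots> = C2 i * B * (P * 2 powr (- q * real l)) * w k" by (simp add: algebra_simps)
          also have "P * 2 powr (- q * real l) = R" unfolding P_def R_def by (simp add: powr_add[symmetric])
          also have "C2 i * B * R * w k \<le> (C1 i * P * L + C2 i * B * R) * w k"
            using C1nn[OF i] P0 L0 w0[of k] by (intro mult_right_mono) auto
          finally show ?thesis using nm by simp
        qed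
      qed
      have isum: "norm (\<Sum>\<^sub>\<infinity>k. wcoef \<psi> f i l k * psi_at \<psi> i l k x) \<le> (C1 i * P * L + C2 i * B * R) * K"
        if i: "i \<in> widx TYPE('n)" for i
      proof (rule infsum_norm_bound)
        show "w summable_on UNIV" unfolding w_def by (rule lattice(1))
        show "infsum w UNIV \<le> K" unfolding w_def K_def by (rule lattice(2))
        show "0 \<le> C1 i * P * L + C2 i * B * R"
          using C1nn[OF i] C2nn[OF i] P0 L0 B0 R0 by simp
        show "\<And>k. norm (wcoef \<psi> f i l k * psi_at \<psi> i l k x) \<le> (C1 i * P * L + C2 i * B * R) * w k"
          by (rule tb[OF i])
      qed
      have "cmod (Qop \<psi> f l x) \<le> (\<Sum>i\<in>widx TYPE('n). norm (\<Sum>\<^sub>\<infinity>k. wcoef \<psi> f i l k * psi_at \<psi> i l k x))"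
        unfolding Qop_def by (rule norm_sum)
      also have "\<dots> \<le> (\<Sum>i\<in>widx TYPE('n). (C1 i * P * L + C2 i * B * R) * K)"
        by (rule sum_mono) (rule isum)
      also have "\<dots> = (\<Sum>i\<in>widx TYPE('n). C1 i * (K * P * L) + C2 i * (K * B * R))"
        by (rule sum.cong) (simp_all add: algebra_simps)
      also have "\<dots> = SC1 * (K * P * L) + SC2 * (K * B * R)"
        unfolding SC1_def SC2_def by (simp only: sum.distrib sum_distrib_right)
      also have "\<dots> = K * SC1 * P * L + K * SC2 * B * R" by (simp only: mult_ac)
      finally have main: "cmod (Qop \<psi> f l x) \<le> K * SC1 * P * L + K * SC2 * B * R" .
      have jr: "0 \<le> real j" and lr: "0 \<le> real l" by simp_all
      have E1: "P \<le> 2 powr ((real CARD('n) / p - s + \<theta> \<epsilon>) * real j)"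
        unfolding P_def
      proof (rule powr_mono)
        show "a * real l \<le> (real CARD('n) / p - s + \<theta> \<epsilon>) * real j"
          using exp_E1[of \<epsilon> "real j" "real l" a] e0 jl unfolding \<theta>_def a_def d_def by auto
      qed simp
      have E2: "R \<le> 2 powr (\<kappa> * real j)"
        unfolding R_def
      proof (rule powr_mono)
        show "a * real l - q * real l \<le> \<kappa> * real j"
          using exp_E2[where a=a and q=q and e=\<epsilon> and jr="real j" and lr="real l" and \<kappa>=\<kappa>] e0 e1 jl q by auto
      qed simp
      have "K * SC1 * P * L \<le> C * 2 powr ((real CARD('n) / p - s + \<theta> \<epsilon>) * real j) * L"
      proof -
        have "K * SC1 \<le> C" unfolding C_def using KS2 by linarith
        then have "(K * SC1) * P \<le> C * 2 powr ((real CARD('n) / p - s + \<theta> \<epsilon>) * real j)"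
          using E1 P0 K0 SC1 Cpos by (intro mult_mono) auto
        then show ?thesis using L0 by (intro mult_right_mono) auto
      qed
      moreover have "K * SC2 * B * R \<le> C * 2 powr (\<kappa> * real j)"
      proof -
        have "K * SC2 * B \<le> C" unfolding C_def using KS1 by linarith
        then show ?thesis using E2 R0 K0 SC2 B0 Cpos by (intro mult_mono) auto
      qed
      ultimately show "cmod (Qop \<psi> f l x)
             \<le> C * 2 powr ((real CARD('n) / p - s + \<theta> \<epsilon>) * real j)
                   * locnorm \<psi> f s p l j (cube_idx j x) \<epsilon>
               + C * 2 powr (\<kappa> * real j)"
        using main unfolding L_def by linarith
    qed
  qed
qed

end
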